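(* Let $G$ be a graph and let $K$ be a cut-set of the complement $\overline{G}$. Then for every induced subgraph $H$ of $G$, \[\chi(G) \leq \frac{1}{2} \left(\omega(G) + \Delta(G) + 1 \right) + \frac{4\chi(G[K]) + 3\chi(H \smallsetminus K) - |H \smallsetminus K|}{4}.\]
   Context: All graphs are finite and simple with non-empty vertex set. $|G|$ denotes the number of vertices, $\chi$ the chromatic number, $\omega$ the clique number, $\Delta$ the maximum degree. $\overline{G}$ is the complement of $G$. A cut-set of $\overline{G}$ is a set $K$ of vertices such that $\overline{G} - K$ is disconnected. $G[K]$ is the subgraph of $G$ induced by $K$, and $H \smallsetminus K$ is the subgraph of $G$ induced by $V(H)\setminus K$. By convention a graph on the empty vertex set has chromatic number $0$ and $0$ vertices. *)

theory Defs
  imports Complex_Main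
begin

text \<open>Graph invariants of
induced subgraphs are computed on a vertex subset S with E restricted to S.\<close>

definition simple_graph :: "'a set \<Rightarrow> ('a \<Rightarrow> 'a \<Rightarrow> bool) \<Rightarrow> bool" where
  "simple_graph V E \<longleftrightarrow> finite V \<and> V \<noteq> {} \<and>
     (\<forall>u v. E u v \<longrightarrow> u \<in> V \<and> v \<in> V) \<and>
     (\<forall>u v. E u v \<longrightarrow> E v u) \<and> (\<forall>v. \<not> E v v)"

definition proper_colouring :: "'a set \<Rightarrow> ('a \<Rightarrow> 'a \<Rightarrow> bool) \<Rightarrow> nat \<Rightarrow> ('a \<Rightarrow> nat) \<Rightarrow> bool" where
  "proper_colouring S E k c \<longleftrightarrow>
     (\<forall>v\<in>S. c v < k) \<and> (\<forall>u\<in>S. \<forall>v\<in>S. E u v \<longrightarrow> c u \<noteq> c v)"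

definition chromatic_number :: "'a set \<Rightarrow> ('a \<Rightarrow> 'a \<Rightarrow> bool) \<Rightarrow> nat" where
  "chromatic_number S E = (LEAST k. \<exists>c. proper_colouring S E k c)"

definition clique_number :: "'a set \<Rightarrow> ('a \<Rightarrow> 'a \<Rightarrow> bool) \<Rightarrow> nat" where
  "clique_number S E =
     Max {card C | C. C \<subseteq> S \<and> (\<forall>u\<in>C. \<forall>v\<in>C. u \<noteq> v \<longrightarrow> E u v)}"

definition max_degree :: "'a set \<Rightarrow> ('a \<Rightarrow> 'a \<Rightarrow> bool) \<Rightarrow> nat" where
  "max_degree S E = Max ((\<lambda>v. card {u \<in> S. E v u}) ` S)"

definition complement :: "'a set \<Rightarrow> ('a \<Rightarrow> 'a \<Rightarrow> bool) \<Rightarrow> 'a \<Rightarrow> 'a \<Rightarrow> bool" where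
  "complement V E u v \<longleftrightarrow> u \<in> V \<and> v \<in> V \<and> u \<noteq> v \<and> \<not> E u v"

definition disconnected :: "'a set \<Rightarrow> ('a \<Rightarrow> 'a \<Rightarrow> bool) \<Rightarrow> bool" where
  "disconnected S E \<longleftrightarrow> (\<exists>A B. A \<noteq> {} \<and> B \<noteq> {} \<and> A \<union> B = S \<and> A \<inter> B = {} \<and>
      (\<forall>a\<in>A. \<forall>b\<in>B. \<not> E a b))"

definition cut_set :: "'a set \<Rightarrow> ('a \<Rightarrow> 'a \<Rightarrow> bool) \<Rightarrow> 'a set \<Rightarrow> bool" where
  "cut_set V E K \<longleftrightarrow> K \<subseteq> V \<and> disconnected (V - K) E"

end

theory Submission
  imports Defs
begin

definition indep :: "'a set \<Rightarrow> ('a \<Rightarrow> 'a \<Rightarrow> bool) \<Rightarrow> bool" where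
  "indep I E \<longleftrightarrow> (\<forall>x\<in>I. \<forall>y\<in>I. \<not> E x y)"

definition clq :: "'a set \<Rightarrow> ('a \<Rightarrow> 'a \<Rightarrow> bool) \<Rightarrow> bool" where
  "clq C E \<longleftrightarrow> (\<forall>u\<in>C. \<forall>v\<in>C. u \<noteq> v \<longrightarrow> E u v)"

definition dg :: "'a set \<Rightarrow> ('a \<Rightarrow> 'a \<Rightarrow> bool) \<Rightarrow> 'a \<Rightarrow> nat" where
  "dg S E v = card {u\<in>S. E v u}"

locale sg =
  fixes E :: "'a \<Rightarrow> 'a \<Rightarrow> bool"
  assumes irr: "\<And>v. \<not> E v v" and sym: "\<And>u v. E u v \<Longrightarrow> E v u"
begin

abbreviation chi where "chi S \<equiv> chromatic_number S E"
abbreviation om where "om S \<equiv> clique_number S E"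

lemma col_le: "proper_colouring S E k c \<Longrightarrow> chi S \<le> k"
  unfolding chromatic_number_def by (rule Least_le) blast

lemma col_card:
  assumes "finite S" shows "\<exists>c. proper_colouring S E (card S) c"
proof -
  obtain h where h: "bij_betw h S {0..<card S}" using ex_bij_betw_finite_nat[OF assms] by blast
  have "proper_colouring S E (card S) h"
    unfolding proper_colouring_def
  proof (intro conjI ballI impI)
    fix v assume "v \<in> S" then show "h v < card S" using h by (auto simp: bij_betw_def)
  next
    fix u v assume "u \<in> S" "v \<in> S" "E u v"
    show "h u \<noteq> h v"
    proof
      assume "h u = h v"
      then have "u = v" using h \<open>u\<in>S\<close> \<open>v\<in>S\<close> by (auto simp: bij_betw_def inj_on_def)
      then show False using \<open>E u v\<close> irr by simp
    qed
  qed
  then show ?thesis by blast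
qed

lemma chi_le_card: "finite S \<Longrightarrow> chi S \<le> card S"
  using col_card col_le by blast

lemma chi_col: assumes "finite S" shows "\<exists>c. proper_colouring S E (chi S) c"
proof -
  obtain c where "proper_colouring S E (card S) c" using col_card[OF assms] by blast
  then have "\<exists>k c. proper_colouring S E k c" by blast
  then show ?thesis unfolding chromatic_number_def by (rule LeastI_ex)
qed

lemma col_image:
  assumes "finite S" "proper_colouring S E k c"
  shows "chi S \<le> card (c ` S)"
proof -
  have fin: "finite (c ` S)" using assms by simp
  obtain h where h: "bij_betw h (c ` S) {0..<card (c ` S)}" using ex_bij_betw_finite_nat[OF fin] by blast
  have "proper_colouring S E (card (c ` S)) (h \<circ> c)"
    unfolding proper_colouring_def
  proof (intro conjI ballI impI)
    fix v assume "v \<in> S" then show "(h \<circ> c) v < card (c ` S)" using h by (auto simp: bij_betw_def)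
  next
    fix u v assume "u \<in> S" "v \<in> S" "E u v"
    then have "c u \<noteq> c v" using assms(2) unfolding proper_colouring_def by blast
    then show "(h \<circ> c) u \<noteq> (h \<circ> c) v" using h \<open>u\<in>S\<close> \<open>v\<in>S\<close>
      by (auto simp: bij_betw_def inj_on_def)
  qed
  then show ?thesis by (rule col_le)
qed

lemma proper_mono: "proper_colouring S E k c \<Longrightarrow> T \<subseteq> S \<Longrightarrow> proper_colouring T E k c"
  unfolding proper_colouring_def by blast

lemma chi_mono: assumes "finite S" "T \<subseteq> S" shows "chi T \<le> chi S"
  using chi_col[OF assms(1)] proper_mono[OF _ assms(2)] col_le by blast

lemma chi_pos: assumes "finite S" "S \<noteq> {}" shows "1 \<le> chi S"
proof -
  obtain c where c: "proper_colouring S E (chi S) c" using chi_col[OF assms(1)] by blast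
  obtain v where "v \<in> S" using assms(2) by blast
  then have "c v < chi S" using c unfolding proper_colouring_def by blast
  then show ?thesis by simp
qed

lemma chi_empty: "chi {} = 0"
proof -
  have "proper_colouring {} E 0 c" for c unfolding proper_colouring_def by simp
  then show ?thesis using col_le by fastforce
qed

lemma chi_indep: assumes "indep I E" shows "chi I \<le> 1"
proof -
  have "proper_colouring I E 1 (\<lambda>_. 0)" using assms unfolding proper_colouring_def indep_def by auto
  then show ?thesis by (rule col_le)
qed

lemma chi_union: assumes "finite A" "finite B" shows "chi (A \<union> B) \<le> chi A + chi B"
proof -
  obtain a where a: "proper_colouring A E (chi A) a" using chi_col[OF assms(1)] by blast
  obtain b where b: "proper_colouring B E (chi B) b" using chi_col[OF assms(2)] by blast
  define c where "c x = (if x \<in> A then a x else chi A + b x)" for x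
  have "proper_colouring (A \<union> B) E (chi A + chi B) c"
    unfolding proper_colouring_def
  proof (intro conjI ballI impI)
    fix v assume "v \<in> A \<union> B" then show "c v < chi A + chi B"
      using a b unfolding c_def proper_colouring_def by auto
  next
    fix u v assume "u \<in> A \<union> B" "v \<in> A \<union> B" "E u v"
    then show "c u \<noteq> c v" using a b unfolding c_def proper_colouring_def by auto
  qed
  then show ?thesis by (rule col_le)
qed

lemma chi_remove_indep:
  assumes "finite X" "indep I E" shows "chi X \<le> chi (X - I) + 1"
proof -
  have "chi X \<le> chi ((X - I) \<union> (X \<inter> I))" by (simp add: Un_Diff_Int)
  also have "\<dots> \<le> chi (X - I) + chi (X \<inter> I)" using assms by (intro chi_union) auto
  also have "chi (X \<inter> I) \<le> 1" using assms(2) by (intro chi_indep) (auto simp: indep_def)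
  finally show ?thesis by simp
qed

lemma chi_join:
  assumes "finite A" "finite B" "\<forall>a\<in>A. \<forall>b\<in>B. E a b"
  shows "chi A + chi B \<le> chi (A \<union> B)"
proof -
  obtain c where c: "proper_colouring (A \<union> B) E (chi (A \<union> B)) c" using chi_col assms by blast
  have d: "c ` A \<inter> c ` B = {}" using c assms(3) unfolding proper_colouring_def by fastforce
  have s: "c ` A \<union> c ` B \<subseteq> {0..<chi (A \<union> B)}" using c unfolding proper_colouring_def by auto
  have "chi A \<le> card (c ` A)" using col_image[OF assms(1) proper_mono[OF c]] by auto
  moreover have "chi B \<le> card (c ` B)" using col_image[OF assms(2) proper_mono[OF c]] by auto
  moreover have "card (c ` A) + card (c ` B) = card (c ` A \<union> c ` B)"
    using d assms by (simp add: card_Un_disjoint)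
  moreover have "card (c ` A \<union> c ` B) \<le> chi (A \<union> B)" using card_mono[OF _ s] by simp
  ultimately show ?thesis by linarith
qed


lemma om_set_fin: "finite S \<Longrightarrow> finite {card C |C. C \<subseteq> S \<and> (\<forall>u\<in>C. \<forall>v\<in>C. u \<noteq> v \<longrightarrow> E u v)}"
proof -
  assume "finite S"
  have "{card C |C. C \<subseteq> S \<and> (\<forall>u\<in>C. \<forall>v\<in>C. u \<noteq> v \<longrightarrow> E u v)} \<subseteq> card ` Pow S" by auto
  then show ?thesis using \<open>finite S\<close> finite_subset by blast
qed

lemma om_ge: assumes "finite S" "C \<subseteq> S" "clq C E" shows "card C \<le> om S"
  unfolding clique_number_def
  by (rule Max_ge[OF om_set_fin[OF assms(1)]]) (use assms in \<open>auto simp: clq_def\<close>)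

lemma om_ex: assumes "finite S" shows "\<exists>C. C \<subseteq> S \<and> clq C E \<and> card C = om S"
proof -
  let ?M = "{card C |C. C \<subseteq> S \<and> (\<forall>u\<in>C. \<forall>v\<in>C. u \<noteq> v \<longrightarrow> E u v)}"
  have ne: "card {} \<in> ?M"
    by (intro CollectI exI[of _ "{}"]) simp
  have "Max ?M \<in> ?M"
    using om_set_fin[OF assms] ne by (intro Max_in) auto
  then obtain C where "Max ?M = card C" "C \<subseteq> S" "\<forall>u\<in>C. \<forall>v\<in>C. u \<noteq> v \<longrightarrow> E u v" by blast
  then show ?thesis unfolding clq_def clique_number_def by metis
qed

lemma om_mono: assumes "finite S" "T \<subseteq> S" shows "om T \<le> om S"
proof -
  obtain C where "C \<subseteq> T" "clq C E" "card C = om T" using om_ex assms finite_subset by metis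
  moreover have "C \<subseteq> S" using \<open>C \<subseteq> T\<close> assms(2) by blast
  ultimately show ?thesis using om_ge[OF assms(1)] by metis
qed

lemma om_pos: assumes "finite S" "v \<in> S" shows "1 \<le> om S"
  using om_ge[OF assms(1), of "{v}"] assms by (auto simp: clq_def)

lemma om_join:
  assumes "finite A" "finite B" "A \<inter> B = {}" "\<forall>a\<in>A. \<forall>b\<in>B. E a b"
  shows "om A + om B \<le> om (A \<union> B)"
proof -
  obtain C where C: "C \<subseteq> A" "clq C E" "card C = om A" using om_ex assms by metis
  obtain D where D: "D \<subseteq> B" "clq D E" "card D = om B" using om_ex assms by metis
  have "clq (C \<union> D) E" using C D assms(4) sym unfolding clq_def by blast
  moreover have "card (C \<union> D) = om A + om B" using C D assms
  proof -
    have "finite C" using C(1) assms(1) finite_subset by auto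
    have "finite D" using D(1) assms(2) finite_subset by auto
    moreover have "C \<inter> D = {}" using C D assms(3) by blast
    ultimately show ?thesis using C D \<open>finite C\<close> by (simp add: card_Un_disjoint)
  qed
  ultimately show ?thesis using om_ge[of "A \<union> B" "C \<union> D"] C D assms by auto
qed

lemma indep_card_le2:
  assumes "finite X" "\<forall>T\<subseteq>X. indep T E \<longrightarrow> card T \<le> 2" "v \<in> X"
  shows "clq {u\<in>X. u \<noteq> v \<and> \<not> E v u} E"
  unfolding clq_def
proof (intro ballI impI)
  fix a b assume a: "a \<in> {u\<in>X. u \<noteq> v \<and> \<not> E v u}" and b: "b \<in> {u\<in>X. u \<noteq> v \<and> \<not> E v u}" and "a \<noteq> b"
  show "E a b"
  proof (rule ccontr)
    assume "\<not> E a b"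
    then have "indep {v, a, b} E" using a b sym irr unfolding indep_def by auto
    moreover have "card {v, a, b} = 3" using a b \<open>a \<noteq> b\<close> by auto
    moreover have "{v, a, b} \<subseteq> X" using a b assms(3) by auto
    ultimately have "(3::nat) \<le> 2" using assms(2) by metis
    then show False by simp
  qed
qed

lemma card_split_vertex:
  assumes "finite X" "v \<in> X"
  shows "card X = 1 + dg X E v + card {u\<in>X. u \<noteq> v \<and> \<not> E v u}"
proof -
  have "X = {v} \<union> {u\<in>X. E v u} \<union> {u\<in>X. u \<noteq> v \<and> \<not> E v u}" using assms by auto
  moreover have "card ({v} \<union> {u\<in>X. E v u} \<union> {u\<in>X. u \<noteq> v \<and> \<not> E v u}) =
      card ({v} \<union> {u\<in>X. E v u}) + card {u\<in>X. u \<noteq> v \<and> \<not> E v u}"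
    using assms by (intro card_Un_disjoint) auto
  moreover have "card ({v} \<union> {u\<in>X. E v u}) = card {v} + card {u\<in>X. E v u}"
    using assms irr by (intro card_Un_disjoint) auto
  ultimately show ?thesis unfolding dg_def by simp
qed

lemma dg_le: assumes "finite X" "v \<in> X" shows "dg X E v + 1 \<le> card X"
  using card_split_vertex[OF assms] by simp


end

definition pairing :: "'a set \<Rightarrow> ('a \<Rightarrow> 'a \<Rightarrow> bool) \<Rightarrow> ('a \<Rightarrow> 'a) \<Rightarrow> bool" where
  "pairing X E p \<longleftrightarrow> (\<forall>x\<in>X. p x \<in> X \<and> p (p x) = x \<and> (p x \<noteq> x \<longrightarrow> \<not> E x (p x)))"

definition cov :: "'a set \<Rightarrow> ('a \<Rightarrow> 'a) \<Rightarrow> nat" where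
  "cov X p = card {x\<in>X. p x \<noteq> x}"

definition mcov :: "'a set \<Rightarrow> ('a \<Rightarrow> 'a \<Rightarrow> bool) \<Rightarrow> nat" where
  "mcov X E = Max {cov X p |p. pairing X E p}"

definition maxp :: "'a set \<Rightarrow> ('a \<Rightarrow> 'a \<Rightarrow> bool) \<Rightarrow> ('a \<Rightarrow> 'a) \<Rightarrow> bool" where
  "maxp X E p \<longleftrightarrow> pairing X E p \<and> cov X p = mcov X E"

context sg begin

lemma pairing_id: "pairing X E (\<lambda>x. x)"
  unfolding pairing_def by simp

lemma cov_le_card: "finite X \<Longrightarrow> cov X p \<le> card X"
  unfolding cov_def by (rule card_mono) auto

lemma mcov_fin: "finite X \<Longrightarrow> finite {cov X p |p. pairing X E p}"
proof -
  assume "finite X"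
  then have "{cov X p |p. pairing X E p} \<subseteq> {0..card X}" using cov_le_card by auto
  then show ?thesis using finite_subset by blast
qed

lemma cov_le_mcov: "finite X \<Longrightarrow> pairing X E p \<Longrightarrow> cov X p \<le> mcov X E"
  unfolding mcov_def by (rule Max_ge[OF mcov_fin]) auto

lemma maxp_ex: assumes "finite X" shows "\<exists>p. maxp X E p"
proof -
  let ?M = "{cov X p |p. pairing X E p}"
  have "cov X (\<lambda>x. x) \<in> ?M" using pairing_id by blast
  then have "Max ?M \<in> ?M" using mcov_fin[OF assms] by (intro Max_in) auto
  then show ?thesis unfolding maxp_def mcov_def by force
qed

lemma pairing_remove:
  assumes "pairing X E p" "x \<in> X"
  shows "pairing (X - {x, p x}) E p"
  using assms unfolding pairing_def by (metis Diff_iff insert_iff singletonD)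

lemma cov_remove:
  assumes "finite X" "pairing X E p" "x \<in> X" "p x \<noteq> x"
  shows "cov (X - {x, p x}) p + 2 = cov X p"
proof -
  have px: "p x \<in> X" "p (p x) = x" using assms unfolding pairing_def by auto
  have eq: "{y\<in>X. p y \<noteq> y} = {y\<in>X - {x, p x}. p y \<noteq> y} \<union> {x, p x}"
    using assms px by auto
  have "card ({y\<in>X - {x, p x}. p y \<noteq> y} \<union> {x, p x}) = card {y\<in>X - {x, p x}. p y \<noteq> y} + card {x, p x}"
    using assms by (intro card_Un_disjoint) auto
  moreover have "card {x, p x} = 2" using assms by simp
  ultimately show ?thesis unfolding cov_def using eq by simp
qed

lemma pairing_induct_aux:
  assumes "\<And>X. finite X \<Longrightarrow> pairing X E p \<Longrightarrow> cov X p = 0 \<Longrightarrow> Q X"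
    and "\<And>X x. finite X \<Longrightarrow> pairing X E p \<Longrightarrow> x \<in> X \<Longrightarrow> p x \<noteq> x \<Longrightarrow> Q (X - {x, p x}) \<Longrightarrow> Q X"
  shows "finite X \<Longrightarrow> pairing X E p \<Longrightarrow> Q X"
proof (induction "cov X p" arbitrary: X rule: less_induct)
  case less
  show ?case
  proof (cases "cov X p = 0")
    case True then show ?thesis using assms(1) less by blast
  next
    case False
    then obtain x where x: "x \<in> X" "p x \<noteq> x" unfolding cov_def by (metis (mono_tags, lifting) card.empty empty_Collect_eq)
    have "Q (X - {x, p x})"
      using less.hyps[of "X - {x, p x}"] cov_remove[OF less.prems x] pairing_remove[OF less.prems(2) x(1)] less.prems
      by simp
    then show ?thesis using assms(2) less.prems x by blast
  qed
qed

lemma cov_even: assumes "finite X" "pairing X E p" shows "even (cov X p)"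
proof (rule pairing_induct_aux[where Q = "\<lambda>X. even (cov X p)", OF _ _ assms])
  fix X assume "cov X p = 0" then show "even (cov X p)" by simp
next
  fix X x assume "finite X" "pairing X E p" "x \<in> X" "p x \<noteq> x" "even (cov (X - {x, p x}) p)"
  then show "even (cov X p)" using cov_remove[of X p x] by (metis even_add even_numeral)
qed

lemma chi_pairing: assumes "finite X" "pairing X E p" shows "2 * chi X + cov X p \<le> 2 * card X"
proof (rule pairing_induct_aux[where Q = "\<lambda>X. 2 * chi X + cov X p \<le> 2 * card X", OF _ _ assms])
  fix X assume "finite X" "cov X p = 0" then show "2 * chi X + cov X p \<le> 2 * card X"
    using chi_le_card[of X] by simp
next
  fix X x assume 2: "finite X" "pairing X E p" "x \<in> X" "p x \<noteq> x"
    "2 * chi (X - {x, p x}) + cov (X - {x, p x}) p \<le> 2 * card (X - {x, p x})"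
  have px: "p x \<in> X" "\<not> E x (p x)" using 2 unfolding pairing_def by auto
  have "indep {x, p x} E" using px irr sym unfolding indep_def by auto
  then have "chi X \<le> chi (X - {x, p x}) + 1" using chi_remove_indep 2 by blast
  moreover have "card (X - {x, p x}) + 2 = card X"
  proof -
    have "card (X - {x, p x}) = card X - card {x, p x}" using 2 px by (intro card_Diff_subset) auto
    moreover have "card {x, p x} = 2" using 2 by simp
    moreover have "card {x, p x} \<le> card X" using 2 px by (intro card_mono) auto
    ultimately show ?thesis by simp
  qed
  moreover have "cov (X - {x, p x}) p + 2 = cov X p" using cov_remove 2 by blast
  ultimately show "2 * chi X + cov X p \<le> 2 * card X" using 2 by linarith
qed

lemma aug:
  assumes "finite X" "maxp X E m" "u \<in> X" "v \<in> X" "u \<noteq> v" "m u = u" "m v = v" "\<not> E u v"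
  shows False
proof -
  define m' where "m' = m(u := v, v := u)"
  have pm: "pairing X E m" using assms unfolding maxp_def by blast
  have "pairing X E m'" unfolding pairing_def
  proof
    fix x assume x: "x \<in> X"
    show "m' x \<in> X \<and> m' (m' x) = x \<and> (m' x \<noteq> x \<longrightarrow> \<not> E x (m' x))"
    proof (cases "x = u \<or> x = v")
      case True then show ?thesis using assms sym unfolding m'_def by auto
    next
      case False
      have "m x \<noteq> u" using assms pm x False unfolding pairing_def by metis
      moreover have "m x \<noteq> v" using assms pm x False unfolding pairing_def by metis
      ultimately show ?thesis using pm x False unfolding m'_def pairing_def by auto
    qed
  qed
  moreover have "cov X m' = cov X m + 2"
  proof -
    have "{x\<in>X. m' x \<noteq> x} = {x\<in>X. m x \<noteq> x} \<union> {u, v}" using assms unfolding m'_def by auto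
    moreover have "card ({x\<in>X. m x \<noteq> x} \<union> {u, v}) = card {x\<in>X. m x \<noteq> x} + card {u, v}"
      using assms by (intro card_Un_disjoint) auto
    ultimately show ?thesis using assms(5) unfolding cov_def by simp
  qed
  ultimately show False using cov_le_mcov[OF assms(1)] assms(2) unfolding maxp_def by fastforce
qed

end

inductive_set cl :: "('a \<Rightarrow> 'a) \<Rightarrow> ('a \<Rightarrow> 'a) \<Rightarrow> 'a \<Rightarrow> 'a set" for m n u where
  cl_base: "u \<in> cl m n u"
| cl_m: "x \<in> cl m n u \<Longrightarrow> m x \<in> cl m n u"
| cl_n: "x \<in> cl m n u \<Longrightarrow> n x \<in> cl m n u"

primrec wk :: "('a \<Rightarrow> 'a) \<Rightarrow> ('a \<Rightarrow> 'a) \<Rightarrow> 'a \<Rightarrow> nat \<Rightarrow> 'a" where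
  "wk m n u 0 = u"
| "wk m n u (Suc i) = (if even i then n else m) (wk m n u i)"

context sg begin

lemma cl_sub:
  assumes "pairing X E m" "pairing X E n" "u \<in> X" shows "cl m n u \<subseteq> X"
proof
  fix x assume "x \<in> cl m n u" then show "x \<in> X"
    by induction (use assms in \<open>auto simp: pairing_def\<close>)
qed

lemma cl_trans:
  assumes "y \<in> cl m n u" shows "cl m n y \<subseteq> cl m n u"
proof
  fix x assume "x \<in> cl m n y" then show "x \<in> cl m n u"
  proof induction
    case cl_base then show ?case by (rule assms)
  next
    case (cl_m x) show ?case using cl_m.IH by (rule cl.cl_m)
  next
    case (cl_n x) show ?case using cl_n.IH by (rule cl.cl_n)
  qed
qed

lemma cl_sym:
  assumes "pairing X E m" "pairing X E n" "u \<in> X" "y \<in> cl m n u" shows "u \<in> cl m n y"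
  using assms(4)
proof induction
  case cl_base then show ?case by (rule cl.cl_base)
next
  case (cl_m x)
  have "x \<in> X" using cl_m.hyps cl_sub assms by blast
  have "m (m x) \<in> cl m n (m x)" by (intro cl.cl_m cl.cl_base)
  then have "x \<in> cl m n (m x)" using \<open>x \<in> X\<close> assms(1) unfolding pairing_def by simp
  then have "cl m n x \<subseteq> cl m n (m x)" by (rule cl_trans)
  then show ?case using cl_m.IH by (rule subsetD)
next
  case (cl_n x)
  have "x \<in> X" using cl_n.hyps cl_sub assms by blast
  have "n (n x) \<in> cl m n (n x)" by (intro cl.cl_n cl.cl_base)
  then have "x \<in> cl m n (n x)" using \<open>x \<in> X\<close> assms(2) unfolding pairing_def by simp
  then have "cl m n x \<subseteq> cl m n (n x)" by (rule cl_trans)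
  then show ?case using cl_n.IH by (rule subsetD)
qed

lemma walk_lemma:
  assumes pm: "pairing X E m" and pn: "pairing X E n" and u: "u \<in> X" "m u = u" "n u \<noteq> u"
  shows "\<exists>z. \<forall>x\<in>cl m n u. (n x = x \<longrightarrow> x = z) \<and> (m x = x \<longrightarrow> x = u \<or> x = z)"
proof -
  define f where "f i = (if even i then n else m)" for i :: nat
  let ?w = "wk m n u"
  have wS: "?w (Suc i) = f i (?w i)" for i by (simp add: f_def)
  have wX: "?w i \<in> X" for i
    by (induction i) (use u pm pn in \<open>auto simp: pairing_def\<close>)
  have finv: "f i (f i x) = x" if "x \<in> X" for i x
    using that pm pn unfolding f_def pairing_def by auto
  have bk: "f i (?w (Suc i)) = ?w i" for i using finv[OF wX[of i], of i] by (simp only: wS)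
  have hcases: "h = f i \<or> (i = 0 \<and> h = m) \<or> (\<exists>i'. i = Suc i' \<and> h = f i')"
    if "h = m \<or> h = n" for h i
  proof (cases i)
    case 0 then show ?thesis using that unfolding f_def by auto
  next
    case (Suc i') then show ?thesis using that unfolding f_def by auto
  qed
  define J where "J = {i. f i (?w i) = ?w i}"
  have fixJ: "i \<in> J \<or> (i = 0 \<and> h = m) \<or> (\<exists>i'. i = Suc i' \<and> i' \<in> J)"
    if hmn: "h = m \<or> h = n" and hfix: "h (?w i) = ?w i" for h i
  proof -
    consider "h = f i" | "i = 0 \<and> h = m" | i' where "i = Suc i'" "h = f i'"
      using hcases[OF hmn, of i] by blast
    then show ?thesis
    proof cases
      case 1 then show ?thesis using hfix unfolding J_def by simp
    next
      case 2 then show ?thesis by simp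
    next
      case 3
      have A: "f i' (?w i') = ?w i" by (simp only: 3(1) wS)
      have c: "f i' (?w (Suc i')) = ?w (Suc i')" using hfix unfolding 3 .
      have B: "?w i' = ?w i" unfolding 3(1) by (rule trans[OF bk[of i', symmetric] c])
      have "f i' (?w i') = ?w i'" by (rule trans[OF A B[symmetric]])
      then have "i' \<in> J" unfolding J_def by (rule CollectI)
      then show ?thesis using 3(1) by blast
    qed
  qed
  have nm: "n \<noteq> m" using u by auto
  have u_rng: "u \<in> range ?w" using rangeI[of ?w 0] by simp
  show ?thesis
  proof (cases "J = {}")
    case True
    have sub: "cl m n u \<subseteq> range ?w"
    proof
      fix x assume "x \<in> cl m n u" then show "x \<in> range ?w"
      proof induction
        case cl_base then show ?case by (rule u_rng)
      next
        case (cl_m x)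
        then obtain i where i: "x = ?w i" by blast
        consider "m = f i" | "i = 0" | i' where "i = Suc i'" "m = f i'" using hcases[of m i] by blast
        then show ?case
        proof cases
          case 1 then show ?thesis using i wS by (metis rangeI)
        next
          case 2 then show ?thesis using i u u_rng by simp
        next
          case 3 then show ?thesis using i bk by (metis rangeI)
        qed
      next
        case (cl_n x)
        then obtain i where i: "x = ?w i" by blast
        consider "n = f i" | "i = 0 \<and> n = m" | i' where "i = Suc i'" "n = f i'" using hcases[of n i] by blast
        then show ?case
        proof cases
          case 1 then show ?thesis using i wS by (metis rangeI)
        next
          case 2 then show ?thesis using nm by simp
        next
          case 3 then show ?thesis using i bk by (metis rangeI)
        qed
      qed
    qed
    have "\<forall>x\<in>cl m n u. (n x = x \<longrightarrow> x = u) \<and> (m x = x \<longrightarrow> x = u \<or> x = u)"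
    proof (intro ballI conjI impI)
      fix x assume "x \<in> cl m n u" "n x = x"
      then obtain i where i: "x = ?w i" using sub by blast
      then show "x = u" using fixJ[of n i] \<open>n x = x\<close> True nm by auto
    next
      fix x assume "x \<in> cl m n u" "m x = x"
      then obtain i where i: "x = ?w i" using sub by blast
      then show "x = u \<or> x = u" using fixJ[of m i] \<open>m x = x\<close> True by auto
    qed
    then show ?thesis by blast
  next
    case False
    define j where "j = (LEAST i. i \<in> J)"
    have jJ: "j \<in> J" using False unfolding j_def by (metis LeastI_ex ex_in_conv)
    have jmin: "i \<in> J \<Longrightarrow> j \<le> i" for i unfolding j_def by (rule Least_le)
    have sub: "cl m n u \<subseteq> ?w ` {..j}"
    proof
      fix x assume "x \<in> cl m n u" then show "x \<in> ?w ` {..j}"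
      proof induction
        case cl_base then show ?case by (metis atMost_iff image_eqI le0 wk.simps(1))
      next
        case (cl_m x)
        then obtain i where i: "x = ?w i" "i \<le> j" by blast
        consider "m = f i" | "i = 0" | i' where "i = Suc i'" "m = f i'" using hcases[of m i] by blast
        then show ?case
        proof cases
          case 1
          show ?thesis
          proof (cases "i = j")
            case True then have "m x = x" using 1 i jJ unfolding J_def by simp
            then show ?thesis using cl_m.IH by simp
          next
            case False then have "Suc i \<le> j" using i by simp
            then show ?thesis using 1 i wS by (metis atMost_iff image_eqI)
          qed
        next
          case 2 then show ?thesis using i u cl_m.IH by simp
        next
          case 3 then show ?thesis using i bk by (metis Suc_leD atMost_iff image_eqI)
        qed
      next
        case (cl_n x)
        then obtain i where i: "x = ?w i" "i \<le> j" by blast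
        consider "n = f i" | "i = 0 \<and> n = m" | i' where "i = Suc i'" "n = f i'" using hcases[of n i] by blast
        then show ?case
        proof cases
          case 1
          show ?thesis
          proof (cases "i = j")
            case True then have "n x = x" using 1 i jJ unfolding J_def by simp
            then show ?thesis using cl_n.IH by simp
          next
            case False then have "Suc i \<le> j" using i by simp
            then show ?thesis using 1 i wS by (metis atMost_iff image_eqI)
          qed
        next
          case 2 then show ?thesis using nm by simp
        next
          case 3 then show ?thesis using i bk by (metis Suc_leD atMost_iff image_eqI)
        qed
      qed
    qed
    have "\<forall>x\<in>cl m n u. (n x = x \<longrightarrow> x = ?w j) \<and> (m x = x \<longrightarrow> x = u \<or> x = ?w j)"
    proof (intro ballI conjI impI)
      fix x assume "x \<in> cl m n u" "n x = x"
      then obtain i where i: "x = ?w i" "i \<le> j" using sub by blast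
      then have "i \<in> J \<or> (\<exists>i'. i = Suc i' \<and> i' \<in> J)" using fixJ[of n i] \<open>n x = x\<close> nm by auto
      then show "x = ?w j" using jmin i by (metis Suc_n_not_le_n le_antisym le_trans)
    next
      fix x assume "x \<in> cl m n u" "m x = x"
      then obtain i where i: "x = ?w i" "i \<le> j" using sub by blast
      then have "i \<in> J \<or> i = 0 \<or> (\<exists>i'. i = Suc i' \<and> i' \<in> J)" using fixJ[of m i] \<open>m x = x\<close> by auto
      then show "x = u \<or> x = ?w j" using jmin i by (metis Suc_n_not_le_n le_antisym le_trans wk.simps(1))
    qed
    then show ?thesis by blast
  qed
qed

end

definition ywalk :: "'a set \<Rightarrow> ('a \<Rightarrow> 'a \<Rightarrow> bool) \<Rightarrow> (nat \<Rightarrow> 'a) \<Rightarrow> nat \<Rightarrow> 'a \<Rightarrow> 'a \<Rightarrow> bool" where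
  "ywalk X E p k a b \<longleftrightarrow> p 0 = a \<and> p k = b \<and> (\<forall>i\<le>k. p i \<in> X) \<and>
     (\<forall>i<k. p i \<noteq> p (Suc i) \<and> \<not> E (p i) (p (Suc i)))"

context sg begin

lemma pairing_swap:
  assumes pm: "pairing X E m" and pn: "pairing X E n" and clo: "\<forall>x\<in>P. m x \<in> P \<and> n x \<in> P"
    and PX: "P \<subseteq> X"
  shows "pairing X E (\<lambda>x. if x \<in> P then n x else m x)"
  unfolding pairing_def
proof
  fix x assume x: "x \<in> X"
  show "(if x \<in> P then n x else m x) \<in> X \<and>
      (if (if x \<in> P then n x else m x) \<in> P then n (if x \<in> P then n x else m x) else m (if x \<in> P then n x else m x)) = x \<and>
      ((if x \<in> P then n x else m x) \<noteq> x \<longrightarrow> \<not> E x (if x \<in> P then n x else m x))"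
  proof (cases "x \<in> P")
    case True
    then have "n x \<in> P" using clo by blast
    then show ?thesis using True x pn unfolding pairing_def by auto
  next
    case False
    have mx: "m x \<in> X" "m (m x) = x" using pm x unfolding pairing_def by auto
    have "m x \<notin> P"
    proof
      assume "m x \<in> P" then have "m (m x) \<in> P" using clo by blast
      then show False using mx False by simp
    qed
    then show ?thesis using False x pm unfolding pairing_def by auto
  qed
qed

lemma cov_split:
  assumes "finite X" "P \<subseteq> X"
  shows "cov X h = card {x\<in>P. h x \<noteq> x} + card {x\<in>X - P. h x \<noteq> x}"
proof -
  have "{x\<in>X. h x \<noteq> x} = {x\<in>P. h x \<noteq> x} \<union> {x\<in>X - P. h x \<noteq> x}" using assms by auto
  moreover have "card ({x\<in>P. h x \<noteq> x} \<union> {x\<in>X - P. h x \<noteq> x}) = card {x\<in>P. h x \<noteq> x} + card {x\<in>X - P. h x \<noteq> x}"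
    using assms by (intro card_Un_disjoint) (auto intro: finite_subset)
  ultimately show ?thesis unfolding cov_def by simp
qed

lemma cov_swap:
  assumes "finite X" "P \<subseteq> X"
  shows "cov X (\<lambda>x. if x \<in> P then n x else m x) + cov X (\<lambda>x. if x \<in> P then m x else n x) = cov X m + cov X n"
proof -
  have a: "{x\<in>P. (if x \<in> P then n x else m x) \<noteq> x} = {x\<in>P. n x \<noteq> x}" by auto
  have b: "{x\<in>X - P. (if x \<in> P then n x else m x) \<noteq> x} = {x\<in>X - P. m x \<noteq> x}" by auto
  have c: "{x\<in>P. (if x \<in> P then m x else n x) \<noteq> x} = {x\<in>P. m x \<noteq> x}" by auto
  have d: "{x\<in>X - P. (if x \<in> P then m x else n x) \<noteq> x} = {x\<in>X - P. n x \<noteq> x}" by auto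
  show ?thesis using cov_split[OF assms] a b c d by simp
qed

lemma gallai:
  assumes fin: "finite X"
    and conn: "\<forall>a\<in>X. \<forall>b\<in>X. \<exists>k p. ywalk X E p k a b"
    and ess: "\<forall>v\<in>X. \<exists>p. maxp X E p \<and> p v = v"
  shows "card X \<le> mcov X E + 1"
proof (rule ccontr)
  assume "\<not> card X \<le> mcov X E + 1"
  then have big: "mcov X E + 2 \<le> card X" by simp
  have two: "\<exists>u v. u \<in> X \<and> v \<in> X \<and> u \<noteq> v \<and> m u = u \<and> m v = v" if "maxp X E m" for m
  proof -
    have eqX: "X = {x\<in>X. m x \<noteq> x} \<union> {x\<in>X. m x = x}" by blast
    have "card ({x\<in>X. m x \<noteq> x} \<union> {x\<in>X. m x = x}) = card {x\<in>X. m x \<noteq> x} + card {x\<in>X. m x = x}"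
      using fin by (intro card_Un_disjoint) auto
    then have "card X = card {x\<in>X. m x \<noteq> x} + card {x\<in>X. m x = x}" using eqX by simp
    then have c2: "2 \<le> card {x\<in>X. m x = x}" using that big unfolding maxp_def cov_def by simp
    have "{x\<in>X. m x = x} \<noteq> {}"
    proof
      assume h: "{x\<in>X. m x = x} = {}"
      have "card {x\<in>X. m x = x} = 0" unfolding h by simp
      then show False using c2 by simp
    qed
    then obtain u where u: "u \<in> {x\<in>X. m x = x}" by blast
    have "card ({x\<in>X. m x = x} - {u}) = card {x\<in>X. m x = x} - 1" using u fin by simp
    then have c1: "1 \<le> card ({x\<in>X. m x = x} - {u})" using c2 by simp
    have "{x\<in>X. m x = x} - {u} \<noteq> {}"
    proof
      assume h: "{x\<in>X. m x = x} - {u} = {}"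
      have "card ({x\<in>X. m x = x} - {u}) = 0" unfolding h by simp
      then show False using c1 by simp
    qed
    then obtain v where "v \<in> {x\<in>X. m x = x} - {u}" by blast
    then have "u \<in> {x\<in>X. m x = x}" "v \<in> {x\<in>X. m x = x}" "u \<noteq> v" using u by auto
    then show ?thesis by blast
  qed
  define Q where "Q k \<longleftrightarrow> (\<exists>m u v p. maxp X E m \<and> u \<in> X \<and> v \<in> X \<and> u \<noteq> v \<and> m u = u \<and> m v = v \<and> ywalk X E p k u v)" for k
  have "\<exists>k. Q k"
  proof -
    obtain m where m: "maxp X E m" using maxp_ex[OF fin] by blast
    obtain u v where "u \<in> X" "v \<in> X" "u \<noteq> v" "m u = u" "m v = v" using two[OF m] by blast
    moreover obtain k p where "ywalk X E p k u v" using conn \<open>u \<in> X\<close> \<open>v \<in> X\<close> by blast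
    ultimately show ?thesis unfolding Q_def using m by blast
  qed
  define k where "k = (LEAST k. Q k)"
  have Qk: "Q k" unfolding k_def using \<open>\<exists>k. Q k\<close> by (rule LeastI_ex)
  have kmin: "Q k' \<Longrightarrow> k \<le> k'" for k' unfolding k_def by (rule Least_le)
  obtain m u v p where m: "maxp X E m" and uv: "u \<in> X" "v \<in> X" "u \<noteq> v" "m u = u" "m v = v"
    and p: "ywalk X E p k u v" using Qk unfolding Q_def by blast
  have pm: "pairing X E m" using m unfolding maxp_def by blast
  have "k \<noteq> 0"
  proof
    assume "k = 0" then show False using p uv(3) unfolding ywalk_def by auto
  qed
  then obtain k1 where k1: "k = Suc k1" by (cases k) auto
  define w where "w = p 1"
  have w: "w \<in> X" "u \<noteq> w" "\<not> E u w" using p k1 unfolding ywalk_def w_def by auto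
  have "w \<noteq> v"
  proof
    assume "w = v" then show False using aug[OF fin m uv(1,2,3,4,5)] w by simp
  qed
  have "k1 \<noteq> 0"
  proof
    assume "k1 = 0" then have "w = v" using p k1 unfolding ywalk_def w_def by auto
    then show False using \<open>w \<noteq> v\<close> by simp
  qed
  have walk2: "ywalk X E (\<lambda>i. p (Suc i)) k1 w v" using p k1 unfolding ywalk_def w_def by auto
  have mw: "m w \<noteq> w"
  proof
    assume "m w = w" then show False using aug[OF fin m uv(1) w(1) w(2) uv(4)] w(3) by blast
  qed
  define dis where "dis q = card {x\<in>X. m x \<noteq> q x}" for q
  obtain n where n: "maxp X E n \<and> n w = n w \<and> n w = w"
    and nmin: "\<forall>q. maxp X E q \<and> q w = q w \<and> q w = w \<longrightarrow> dis n \<le> dis q"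
    using ex_has_least_nat[of "\<lambda>q. maxp X E q \<and> q w = q w \<and> q w = w" _ dis] ess w(1) by blast
  have pn: "pairing X E n" and nw: "n w = w" using n unfolding maxp_def by auto
  have nu: "n u \<noteq> u"
  proof
    assume nu: "n u = u"
    have "maxp X E n" using n by blast
    then show False using aug[OF fin _ uv(1) w(1) w(2) nu nw w(3)] by blast
  qed
  have nv: "n v \<noteq> v"
  proof
    assume "n v = v"
    then have "Q k1" unfolding Q_def using n w(1) uv(2) \<open>w \<noteq> v\<close> nw walk2 by blast
    then show False using kmin k1 by fastforce
  qed
  have reach: "w \<in> cl m n y" if y: "y \<in> X" "m y = y" "n y \<noteq> y" for y
  proof (rule ccontr)
    assume wn: "w \<notin> cl m n y"
    let ?P = "cl m n y"
    have PX: "?P \<subseteq> X" using cl_sub[OF pm pn y(1)] .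
    have clo: "\<forall>x\<in>?P. m x \<in> ?P \<and> n x \<in> ?P" by (auto intro: cl.cl_m cl.cl_n)
    have clo': "\<forall>x\<in>?P. n x \<in> ?P \<and> m x \<in> ?P" using clo by blast
    define m' where "m' = (\<lambda>x. if x \<in> ?P then n x else m x)"
    define n' where "n' = (\<lambda>x. if x \<in> ?P then m x else n x)"
    have pm': "pairing X E m'" unfolding m'_def using pairing_swap[OF pm pn clo PX] .
    have pn': "pairing X E n'" unfolding n'_def using pairing_swap[OF pn pm clo' PX] .
    have "cov X m' + cov X n' = cov X m + cov X n" unfolding m'_def n'_def using cov_swap[OF fin PX] .
    moreover have "cov X m' \<le> cov X m" using cov_le_mcov[OF fin pm'] m unfolding maxp_def by simp
    moreover have "cov X n' \<le> cov X n" using cov_le_mcov[OF fin pn'] n unfolding maxp_def by simp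
    ultimately have "cov X n' = mcov X E" using n unfolding maxp_def by simp
    then have mn': "maxp X E n'" using pn' unfolding maxp_def by simp
    have n'w: "n' w = w" unfolding n'_def using wn nw by simp
    have "{x\<in>X. m x \<noteq> n' x} \<subset> {x\<in>X. m x \<noteq> n x}"
    proof
      show "{x\<in>X. m x \<noteq> n' x} \<subseteq> {x\<in>X. m x \<noteq> n x}" unfolding n'_def by auto
      have "y \<in> ?P" by (rule cl.cl_base)
      then have "y \<notin> {x\<in>X. m x \<noteq> n' x}" unfolding n'_def by simp
      moreover have "y \<in> {x\<in>X. m x \<noteq> n x}" using y by simp
      ultimately show "{x\<in>X. m x \<noteq> n' x} \<noteq> {x\<in>X. m x \<noteq> n x}" by blast
    qed
    then have "dis n' < dis n" unfolding dis_def using fin by (intro psubset_card_mono) auto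
    moreover have "dis n \<le> dis n'" using nmin mn' n'w by blast
    ultimately show False by simp
  qed
  have wu: "w \<in> cl m n u" using reach uv nu by blast
  have wv: "w \<in> cl m n v" using reach uv nv by blast
  have "v \<in> cl m n w" using cl_sym[OF pm pn uv(2) wv] .
  then have vu: "v \<in> cl m n u" using cl_trans[OF wu] by blast
  obtain z where z: "\<forall>x\<in>cl m n u. (n x = x \<longrightarrow> x = z) \<and> (m x = x \<longrightarrow> x = u \<or> x = z)"
    using walk_lemma[OF pm pn uv(1) uv(4) nu] by blast
  have "w = z" using z wu nw by blast
  moreover have "v = u \<or> v = z" using z vu uv(5) by blast
  ultimately show False using uv(3) \<open>w \<noteq> v\<close> by blast
qed

end

context sg begin

lemma walk_ext:
  assumes "ywalk X E p k a x" "y \<in> X" "x \<noteq> y" "\<not> E x y"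
  shows "ywalk X E (p(Suc k := y)) (Suc k) a y"
  using assms unfolding ywalk_def
  by (auto simp: less_Suc_eq le_Suc_eq)

lemma walk_triv: "a \<in> X \<Longrightarrow> ywalk X E (\<lambda>_. a) 0 a a"
  unfolding ywalk_def by simp

lemma split_nonconn:
  assumes "a \<in> X" "b \<in> X" "\<not> (\<exists>k p. ywalk X E p k a b)"
  shows "\<exists>A B. A \<noteq> {} \<and> B \<noteq> {} \<and> A \<union> B = X \<and> A \<inter> B = {} \<and> (\<forall>x\<in>A. \<forall>y\<in>B. E x y)"
proof -
  define A where "A = {x\<in>X. \<exists>k p. ywalk X E p k a x}"
  define B where "B = X - A"
  have "a \<in> A" unfolding A_def using assms(1) walk_triv by blast
  moreover have "b \<in> B" unfolding B_def A_def using assms by blast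
  moreover have "\<forall>x\<in>A. \<forall>y\<in>B. E x y"
  proof (intro ballI)
    fix x y assume x: "x \<in> A" and y: "y \<in> B"
    show "E x y"
    proof (rule ccontr)
      assume ne: "\<not> E x y"
      obtain k p where p: "ywalk X E p k a x" using x unfolding A_def by blast
      have "x \<noteq> y" using x y unfolding B_def by blast
      then have "ywalk X E (p(Suc k := y)) (Suc k) a y" using walk_ext[OF p _ _ ne] y unfolding B_def by blast
      then have "y \<in> A" using y unfolding A_def B_def by blast
      then show False using y unfolding B_def by blast
    qed
  qed
  moreover have "A \<union> B = X" "A \<inter> B = {}" unfolding A_def B_def by auto
  ultimately show ?thesis by blast
qed

lemma dg_join:
  assumes "finite X" "A \<subseteq> X" "B \<subseteq> X" "A \<inter> B = {}" "x \<in> A" "\<forall>y\<in>B. E x y"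
  shows "dg A E x + card B \<le> dg X E x"
proof -
  have "{u\<in>A. E x u} \<union> B \<subseteq> {u\<in>X. E x u}" using assms by auto
  then have "card ({u\<in>A. E x u} \<union> B) \<le> card {u\<in>X. E x u}" using assms(1) by (intro card_mono) auto
  moreover have "card ({u\<in>A. E x u} \<union> B) = card {u\<in>A. E x u} + card B"
    using assms by (intro card_Un_disjoint) (auto intro: finite_subset)
  ultimately show ?thesis unfolding dg_def by simp
qed

lemma dg_mono: assumes "finite X" "Y \<subseteq> X" shows "dg Y E x \<le> dg X E x"
  unfolding dg_def using assms by (intro card_mono) auto

lemma mcov_join:
  assumes "finite A" "finite B" "A \<inter> B = {}"
  shows "mcov A E + mcov B E \<le> mcov (A \<union> B) E"
proof -
  obtain pA where pA: "maxp A E pA" using maxp_ex assms by blast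
  obtain pB where pB: "maxp B E pB" using maxp_ex assms by blast
  define q where "q x = (if x \<in> A then pA x else pB x)" for x
  have "pairing (A \<union> B) E q"
    unfolding pairing_def
  proof
    fix x assume x: "x \<in> A \<union> B"
    show "q x \<in> A \<union> B \<and> q (q x) = x \<and> (q x \<noteq> x \<longrightarrow> \<not> E x (q x))"
    proof (cases "x \<in> A")
      case True
      then show ?thesis using pA unfolding maxp_def pairing_def q_def by auto
    next
      case False
      then have "x \<in> B" using x by blast
      then have "pB x \<in> B" "pB (pB x) = x" "pB x \<noteq> x \<longrightarrow> \<not> E x (pB x)" using pB unfolding maxp_def pairing_def by auto
      moreover have "pB x \<notin> A" using \<open>pB x \<in> B\<close> assms(3) by blast
      ultimately show ?thesis using False unfolding q_def by auto
    qed
  qed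
  then have "cov (A \<union> B) q \<le> mcov (A \<union> B) E" using cov_le_mcov assms by blast
  moreover have "cov (A \<union> B) q = cov A pA + cov B pB"
  proof -
    have "cov (A \<union> B) q = card {x\<in>A. q x \<noteq> x} + card {x\<in>A \<union> B - A. q x \<noteq> x}"
      using cov_split[of "A \<union> B" A q] assms by simp
    moreover have "{x\<in>A. q x \<noteq> x} = {x\<in>A. pA x \<noteq> x}" unfolding q_def by auto
    moreover have "{x\<in>A \<union> B - A. q x \<noteq> x} = {x\<in>B. pB x \<noteq> x}" unfolding q_def using assms(3) by auto
    ultimately show ?thesis unfolding cov_def by simp
  qed
  ultimately show ?thesis using pA pB unfolding maxp_def by simp
qed

lemma mcov_remove:
  assumes "finite X" "v \<in> X" "\<forall>p. maxp X E p \<longrightarrow> p v \<noteq> v"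
  shows "mcov (X - {v}) E + 2 \<le> mcov X E"
proof -
  obtain q where q: "maxp (X - {v}) E q" using maxp_ex assms by blast
  define q' where "q' = q(v := v)"
  have pq: "pairing (X - {v}) E q" using q unfolding maxp_def by blast
  have "pairing X E q'"
    unfolding pairing_def
  proof
    fix x assume x: "x \<in> X"
    show "q' x \<in> X \<and> q' (q' x) = x \<and> (q' x \<noteq> x \<longrightarrow> \<not> E x (q' x))"
    proof (cases "x = v")
      case True then show ?thesis using assms unfolding q'_def by simp
    next
      case False
      then have "q x \<in> X - {v}" "q (q x) = x" "q x \<noteq> x \<longrightarrow> \<not> E x (q x)" using pq x unfolding pairing_def by auto
      then show ?thesis using False unfolding q'_def by auto
    qed
  qed
  moreover have cq: "cov X q' = cov (X - {v}) q"
  proof -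
    have "{x\<in>X. q' x \<noteq> x} = {x\<in>X - {v}. q x \<noteq> x}" unfolding q'_def by auto
    then show ?thesis unfolding cov_def by simp
  qed
  ultimately have le: "mcov (X - {v}) E \<le> mcov X E" using cov_le_mcov[OF assms(1) \<open>pairing X E q'\<close>] q unfolding maxp_def by simp
  have "mcov (X - {v}) E \<noteq> mcov X E"
  proof
    assume "mcov (X - {v}) E = mcov X E"
    then have "maxp X E q'" using \<open>pairing X E q'\<close> cq q unfolding maxp_def by simp
    moreover have "q' v = v" unfolding q'_def by simp
    ultimately show False using assms(3) by blast
  qed
  moreover have "even (mcov (X - {v}) E)" using cov_even[OF _ pq] q assms(1) unfolding maxp_def by simp
  moreover have "even (mcov X E)"
  proof -
    obtain p where "maxp X E p" using maxp_ex assms by blast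
    then show ?thesis using cov_even[OF assms(1)] unfolding maxp_def by metis
  qed
  ultimately show ?thesis using le by (metis add_2_eq_Suc' dvd_add_triv_right_iff even_Suc le_antisym not_less_eq_eq)
qed


lemma Lp:
  fixes d :: int
  assumes "finite X" "\<forall>T\<subseteq>X. indep T E \<longrightarrow> card T \<le> 2" "\<forall>v\<in>X. int (dg X E v) \<le> d" "-1 \<le> d"
  shows "3 * int (card X) \<le> 2 * int (mcov X E) + 2 * int (om X) + d + 1"
  using assms
proof (induction "card X" arbitrary: X d rule: less_induct)
  case less
  note fin = less.prems(1) and a2 = less.prems(2)
  show ?case
  proof (cases "X = {}")
    case True then show ?thesis using less.prems by simp
  next
    case False
    then obtain v0 where v0: "v0 \<in> X" by blast
    define d0 where "d0 = min d (int (card X) - 1)"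
    have deg0: "\<forall>v\<in>X. int (dg X E v) \<le> d0" using less.prems dg_le[OF fin] unfolding d0_def by fastforce
    have d0pos: "0 \<le> d0" using deg0 v0 by fastforce
    have d0n: "d0 \<le> int (card X) - 1" unfolding d0_def by simp
    have "3 * int (card X) \<le> 2 * int (mcov X E) + 2 * int (om X) + d0 + 1"
    proof (cases "om X \<le> 1")
      case True
      have indX: "indep X E"
        unfolding indep_def
      proof (intro ballI notI)
        fix x y assume xy: "x \<in> X" "y \<in> X" "E x y"
        then have "x \<noteq> y" using irr by auto
        then have "card {x, y} \<le> om X" using om_ge[OF fin, of "{x, y}"] xy sym unfolding clq_def by auto
        then show False using True \<open>x \<noteq> y\<close> by simp
      qed
      then have c2: "card X \<le> 2" using a2 by blast
      have o1: "1 \<le> om X" using om_pos[OF fin v0] .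
      show ?thesis
      proof (cases "card X = 1")
        case True then show ?thesis using o1 d0pos by simp
      next
        case False
        have "card X \<noteq> 0" using fin \<open>X \<noteq> {}\<close> by simp
        then have "card X = 2" using c2 False by linarith
        then obtain a b where ab: "X = {a, b}" "a \<noteq> b" unfolding card_2_iff by blast
        define p where "p x = (if x = a then b else if x = b then a else x)" for x
        have nab: "\<not> E a b" "\<not> E b a" using indX ab unfolding indep_def by auto
        have "pairing X E p" unfolding pairing_def
        proof
          fix x assume "x \<in> X"
          then have "x = a \<or> x = b" using ab by blast
          then show "p x \<in> X \<and> p (p x) = x \<and> (p x \<noteq> x \<longrightarrow> \<not> E x (p x))"
            using ab nab unfolding p_def by auto
        qed
        moreover have "cov X p = 2"
        proof -
          have "{x\<in>X. p x \<noteq> x} = {a, b}" using ab unfolding p_def by auto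
          then show ?thesis unfolding cov_def using ab by simp
        qed
        ultimately have "2 \<le> mcov X E" using cov_le_mcov[OF fin] by metis
        then show ?thesis using \<open>card X = 2\<close> o1 d0pos by simp
      qed
    next
      case om2: False
      show ?thesis
      proof (cases "\<forall>a\<in>X. \<forall>b\<in>X. \<exists>k p. ywalk X E p k a b")
        case False
        then obtain a b where ab: "a \<in> X" "b \<in> X" "\<not> (\<exists>k p. ywalk X E p k a b)" by blast
        obtain A B where AB: "A \<noteq> {}" "B \<noteq> {}" "A \<union> B = X" "A \<inter> B = {}" "\<forall>x\<in>A. \<forall>y\<in>B. E x y"
          using split_nonconn[OF ab] by blast
        have finA: "finite A" using AB(3) fin by (metis finite_Un)
        have finB: "finite B" using AB(3) fin by (metis finite_Un)
        have cX: "card X = card A + card B" using card_Un_disjoint[OF finA finB AB(4)] AB(3) by simp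
        have cA: "0 < card A" "0 < card B" using AB(1,2) finA finB by auto
        have AX: "A \<subseteq> X" and BX: "B \<subseteq> X" using AB(3) by auto
        have BA: "B \<inter> A = {}" using AB(4) by blast
        have degA: "\<forall>x\<in>A. int (dg A E x) \<le> d0 - int (card B)"
        proof
          fix x assume xA: "x \<in> A"
          have "\<forall>y\<in>B. E x y" using AB(5) xA by blast
          then have h: "dg A E x + card B \<le> dg X E x" using dg_join[OF fin AX BX AB(4) xA] by blast
          have h2: "int (dg A E x) + int (card B) \<le> int (dg X E x)" using h by (simp only: of_nat_add[symmetric] of_nat_le_iff)
          have "int (dg X E x) \<le> d0" using deg0 xA AX by blast
          then show "int (dg A E x) \<le> d0 - int (card B)" using h2 by linarith
        qed
        have degB: "\<forall>x\<in>B. int (dg B E x) \<le> d0 - int (card A)"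
        proof
          fix x assume xB: "x \<in> B"
          have "\<forall>y\<in>A. E x y" using AB(5) xB sym by blast
          then have h: "dg B E x + card A \<le> dg X E x" using dg_join[OF fin BX AX BA xB] by blast
          have h2: "int (dg B E x) + int (card A) \<le> int (dg X E x)" using h by (simp only: of_nat_add[symmetric] of_nat_le_iff)
          have "int (dg X E x) \<le> d0" using deg0 xB BX by blast
          then show "int (dg B E x) \<le> d0 - int (card A)" using h2 by linarith
        qed
        have "A \<noteq> {}" using AB by blast
        then obtain a0 where "a0 \<in> A" by blast
        then have dA: "-1 \<le> d0 - int (card B)" using degA by fastforce
        obtain b0 where "b0 \<in> B" using AB by blast
        then have dB: "-1 \<le> d0 - int (card A)" using degB by fastforce
        have IA: "3 * int (card A) \<le> 2 * int (mcov A E) + 2 * int (om A) + (d0 - int (card B)) + 1"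
        proof -
          have a2A: "\<forall>T\<subseteq>A. indep T E \<longrightarrow> card T \<le> 2" using a2 AX by blast
          have "card A < card X" using cX cA by simp
          then show ?thesis using less.hyps[OF _ finA a2A degA dA] by blast
        qed
        have IB: "3 * int (card B) \<le> 2 * int (mcov B E) + 2 * int (om B) + (d0 - int (card A)) + 1"
        proof -
          have a2B: "\<forall>T\<subseteq>B. indep T E \<longrightarrow> card T \<le> 2" using a2 BX by blast
          have "card B < card X" using cX cA by simp
          then show ?thesis using less.hyps[OF _ finB a2B degB dB] by blast
        qed
        have "mcov A E + mcov B E \<le> mcov X E" using mcov_join[OF finA finB AB(4)] AB(3) by simp
        moreover have "om A + om B \<le> om X" using om_join[OF finA finB AB(4) AB(5)] AB(3) by simp
        ultimately show ?thesis using IA IB cX d0n by linarith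
      next
        case conn: True
        show ?thesis
        proof (cases "\<exists>v\<in>X. \<forall>p. maxp X E p \<longrightarrow> p v \<noteq> v")
          case True
          then obtain v where v: "v \<in> X" "\<forall>p. maxp X E p \<longrightarrow> p v \<noteq> v" by blast
          have m2: "mcov (X - {v}) E + 2 \<le> mcov X E" using mcov_remove[OF fin v] .
          have deg': "\<forall>x\<in>X - {v}. int (dg (X - {v}) E x) \<le> d0"
          proof
            fix x assume x: "x \<in> X - {v}"
            have "dg (X - {v}) E x \<le> dg X E x" using dg_mono[OF fin, of "X - {v}"] by blast
            moreover have "int (dg X E x) \<le> d0" using deg0 x by blast
            ultimately show "int (dg (X - {v}) E x) \<le> d0" by linarith
          qed
          have "card (X - {v}) < card X" using card_Diff1_less[OF fin v(1)] .
          then have "3 * int (card (X - {v})) \<le> 2 * int (mcov (X - {v}) E) + 2 * int (om (X - {v})) + d0 + 1"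
          proof -
            have a2v: "\<forall>T\<subseteq>X - {v}. indep T E \<longrightarrow> card T \<le> 2" using a2 by blast
            have "-1 \<le> d0" using d0pos by simp
            then show ?thesis using less.hyps[OF \<open>card (X - {v}) < card X\<close> _ a2v deg'] fin by blast
          qed
          moreover have "om (X - {v}) \<le> om X" using om_mono[OF fin] by blast
          moreover have "card (X - {v}) + 1 = card X"
          proof -
            have "0 < card X" using fin v(1) card_gt_0_iff by blast
            then show ?thesis using card_Diff_singleton[OF v(1)] by simp
          qed
          ultimately show ?thesis using m2 by linarith
        next
          case False
          then have ess: "\<forall>v\<in>X. \<exists>p. maxp X E p \<and> p v = v" by blast
          have g: "card X \<le> mcov X E + 1" using gallai[OF fin conn ess] .
          have cl: "clq {u\<in>X. u \<noteq> v0 \<and> \<not> E v0 u} E" using indep_card_le2[OF fin a2 v0] .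
          have "card {u\<in>X. u \<noteq> v0 \<and> \<not> E v0 u} \<le> om X" using om_ge[OF fin _ cl] by blast
          moreover have "card X = 1 + dg X E v0 + card {u\<in>X. u \<noteq> v0 \<and> \<not> E v0 u}"
            using card_split_vertex[OF fin v0] .
          moreover have "int (dg X E v0) \<le> d0" using deg0 v0 by blast
          ultimately show ?thesis using g om2 by linarith
        qed
      qed
    qed
    moreover have "d0 \<le> d" unfolding d0_def by simp
    ultimately show ?thesis by linarith
  qed
qed

lemma Lchi:
  fixes d :: int
  assumes "finite X" "\<forall>T\<subseteq>X. indep T E \<longrightarrow> card T \<le> 2" "\<forall>v\<in>X. int (dg X E v) \<le> d" "-1 \<le> d"
  shows "4 * int (chi X) \<le> 2 * int (om X) + int (card X) + d + 1"
proof -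
  obtain p where p: "maxp X E p" using maxp_ex assms by blast
  have "2 * chi X + mcov X E \<le> 2 * card X" using chi_pairing[OF assms(1)] p unfolding maxp_def by metis
  then show ?thesis using Lp[OF assms] by linarith
qed

end

context sg begin

lemma colour_class:
  assumes "finite S" "S \<noteq> {}"
  shows "\<exists>C0. C0 \<subseteq> S \<and> C0 \<noteq> {} \<and> indep C0 E \<and> chi (S - C0) + 1 \<le> chi S"
proof -
  obtain c where c: "proper_colouring S E (chi S) c" using chi_col[OF assms(1)] by blast
  obtain s0 where s0: "s0 \<in> S" using assms(2) by blast
  define C0 where "C0 = {x\<in>S. c x = c s0}"
  have ind: "indep C0 E" unfolding indep_def
  proof (intro ballI notI)
    fix x y assume "x \<in> C0" "y \<in> C0" "E x y"
    then have "c x \<noteq> c y" using c unfolding C0_def proper_colouring_def by blast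
    then show False using \<open>x \<in> C0\<close> \<open>y \<in> C0\<close> unfolding C0_def by simp
  qed
  define c' where "c' x = (if c s0 < c x then c x - 1 else c x)" for x
  have lt: "c x < chi S" if "x \<in> S" for x using c that unfolding proper_colouring_def by blast
  have "proper_colouring (S - C0) E (chi S - 1) c'"
    unfolding proper_colouring_def
  proof (intro conjI ballI impI)
    fix v assume v: "v \<in> S - C0"
    then have "c v \<noteq> c s0" "c v < chi S" "c s0 < chi S" using lt s0 unfolding C0_def by auto
    then show "c' v < chi S - 1" unfolding c'_def by auto
  next
    fix u v assume u: "u \<in> S - C0" and v: "v \<in> S - C0" and "E u v"
    then have "c u \<noteq> c v" using c unfolding proper_colouring_def by blast
    moreover have "c u \<noteq> c s0" "c v \<noteq> c s0" using u v unfolding C0_def by auto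
    ultimately show "c' u \<noteq> c' v" unfolding c'_def by auto
  qed
  then have "chi (S - C0) \<le> chi S - 1" by (rule col_le)
  moreover have "1 \<le> chi S" using chi_pos[OF assms] .
  moreover have "s0 \<in> C0" "C0 \<subseteq> S" using s0 unfolding C0_def by auto
  ultimately show ?thesis using ind by (intro exI[of _ C0]) auto
qed

lemma max_indep:
  assumes "finite X" "C0 \<subseteq> X" "indep C0 E"
  shows "\<exists>I. C0 \<subseteq> I \<and> I \<subseteq> X \<and> indep I E \<and> (\<forall>x\<in>X - I. \<exists>y\<in>I. E x y)"
proof -
  define F where "F = {J. C0 \<subseteq> J \<and> J \<subseteq> X \<and> indep J E}"
  have "F \<subseteq> Pow X" unfolding F_def by auto
  then have finF: "finite F" using assms(1) finite_subset by blast
  have "C0 \<in> F" unfolding F_def using assms by auto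
  then obtain I where I: "I \<in> F" and Imax: "\<forall>J\<in>F. I \<le> J \<longrightarrow> I = J"
    using finite_has_maximal[OF finF] by blast
  have "\<exists>y\<in>I. E x y" if x: "x \<in> X - I" for x
  proof (rule ccontr)
    assume "\<not> (\<exists>y\<in>I. E x y)"
    then have "indep (insert x I) E" using I irr sym unfolding F_def indep_def by blast
    then have "insert x I \<in> F" using I x unfolding F_def by auto
    then have "I = insert x I" using Imax by blast
    then show False using x by blast
  qed
  then show ?thesis using I unfolding F_def by blast
qed

lemma Pmain:
  fixes d :: int
  assumes "finite X" "S \<subseteq> X" "\<forall>v\<in>X. int (dg X E v) \<le> d" "-1 \<le> d"
  shows "4 * int (chi X) \<le> 2 * int (om X) + int (card X) + d + 1 + 3 * int (chi S) - int (card S)"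
  using assms
proof (induction "card X" arbitrary: X S d rule: less_induct)
  case less
  note fin = less.prems(1)
  show ?case
  proof (cases "X = {}")
    case True
    then have "S = {}" using less.prems by blast
    then show ?thesis using True less.prems chi_empty by simp
  next
    case False
    then obtain v0 where v0: "v0 \<in> X" by blast
    have d0: "0 \<le> d" using less.prems(3) v0 by fastforce
    have ne: "4 * int (chi X) \<le> 2 * int (om X) + int (card X) + d + 1 + 3 * int (chi S') - int (card S')"
      if S': "S' \<subseteq> X" "S' \<noteq> {}" for S'
    proof -
      have finS: "finite S'" using S' fin finite_subset by blast
      obtain C0 where C0: "C0 \<subseteq> S'" "C0 \<noteq> {}" "indep C0 E" "chi (S' - C0) + 1 \<le> chi S'"
        using colour_class[OF finS S'(2)] by blast
      obtain I where I: "C0 \<subseteq> I" "I \<subseteq> X" "indep I E" "\<forall>x\<in>X - I. \<exists>y\<in>I. E x y"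
        using max_indep[OF fin _ C0(3)] C0(1) S'(1) by blast
      have finI: "finite I" using I(2) fin finite_subset by blast
      have "I \<noteq> {}" using C0 I by blast
      then have "X - I \<subset> X" using I(2) by blast
      then have lessc: "card (X - I) < card X" using psubset_card_mono[OF fin] by blast
      have degI: "\<forall>x\<in>X - I. int (dg (X - I) E x) \<le> d - 1"
      proof
        fix x assume x: "x \<in> X - I"
        then obtain y where y: "y \<in> I" "E x y" using I(4) by blast
        have "insert y {u\<in>X - I. E x u} \<subseteq> {u\<in>X. E x u}" using y I(2) by auto
        then have "card (insert y {u\<in>X - I. E x u}) \<le> card {u\<in>X. E x u}" using fin by (intro card_mono) auto
        moreover have "card (insert y {u\<in>X - I. E x u}) = card {u\<in>X - I. E x u} + 1" using y fin by simp
        ultimately have "dg (X - I) E x + 1 \<le> dg X E x" unfolding dg_def by simp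
        moreover have "int (dg X E x) \<le> d" using less.prems(3) x by blast
        ultimately show "int (dg (X - I) E x) \<le> d - 1" by linarith
      qed
      have IH: "4 * int (chi (X - I)) \<le> 2 * int (om (X - I)) + int (card (X - I)) + (d - 1) + 1
          + 3 * int (chi (S' - I)) - int (card (S' - I))"
      proof -
        have "finite (X - I)" using fin by simp
        moreover have "S' - I \<subseteq> X - I" using S' by blast
        moreover have "-1 \<le> d - 1" using d0 by simp
        ultimately show ?thesis using less.hyps[OF lessc _ _ degI] by blast
      qed
      have c1: "chi X \<le> chi (X - I) + 1" using chi_remove_indep[OF fin I(3)] .
      have c2: "om (X - I) \<le> om X" using om_mono[OF fin] by blast
      have c3: "card (X - I) + card I = card X" using card_Diff_subset[OF finI I(2)] card_mono[OF fin I(2)] by simp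
      have c4: "chi (S' - I) \<le> chi (S' - C0)" using chi_mono[of "S' - C0" "S' - I"] finS C0 I by blast
      have c5: "card (S' - I) + card (S' \<inter> I) = card S'"
      proof -
        have "card ((S' - I) \<union> (S' \<inter> I)) = card (S' - I) + card (S' \<inter> I)"
          using finS by (intro card_Un_disjoint) auto
        moreover have "(S' - I) \<union> (S' \<inter> I) = S'" by blast
        ultimately show ?thesis by simp
      qed
      have c6: "card (S' \<inter> I) \<le> card I" using finI by (intro card_mono) auto
      show ?thesis using IH c1 c2 c3 c4 c5 c6 C0(4) by linarith
    qed
    show ?thesis
    proof (cases "S = {}")
      case False then show ?thesis using ne less.prems(2) by blast
    next
      case Se: True
      show ?thesis
      proof (cases "\<exists>T\<subseteq>X. indep T E \<and> card T = 3")
        case True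
        then obtain T where T: "T \<subseteq> X" "indep T E" "card T = 3" by blast
        then have "T \<noteq> {}" by auto
        then have "4 * int (chi X) \<le> 2 * int (om X) + int (card X) + d + 1 + 3 * int (chi T) - int (card T)"
          using ne T by blast
        moreover have "chi T \<le> 1" using chi_indep[OF T(2)] .
        ultimately show ?thesis using Se T chi_empty by simp
      next
        case False
        have a2: "\<forall>T\<subseteq>X. indep T E \<longrightarrow> card T \<le> 2"
        proof (intro allI impI)
          fix T assume T: "T \<subseteq> X" "indep T E"
          show "card T \<le> 2"
          proof (rule ccontr)
            assume "\<not> card T \<le> 2"
            then obtain T' where "T' \<subseteq> T" "card T' = 3" using obtain_subset_with_card_n[of 3 T] by auto
            moreover then have "indep T' E" using T unfolding indep_def by blast
            ultimately show False using False T by blast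
          qed
        qed
        show ?thesis using Lchi[OF fin a2 less.prems(3,4)] Se chi_empty by simp
      qed
    qed
  qed
qed

end

theorem proposition4:
  fixes V :: "'a set" and E :: "'a \<Rightarrow> 'a \<Rightarrow> bool" and K H :: "'a set"
  assumes "simple_graph V E"
    and "cut_set V (complement V E) K"
    and "H \<subseteq> V" and "H \<noteq> {}"
  shows "real (chromatic_number V E)
    \<le> (real (clique_number V E) + real (max_degree V E) + 1) / 2
       + (4 * real (chromatic_number K E) + 3 * real (chromatic_number (H - K) E)
          - real (card (H - K))) / 4"
proof -
  have fin: "finite V" using assms(1) unfolding simple_graph_def by blast
  have sgE: "sg E" unfolding sg_def using assms(1) unfolding simple_graph_def by blast
  interpret sg E by (rule sgE)
  have KV: "K \<subseteq> V" using assms(2) unfolding cut_set_def by blast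
  obtain A B where AB: "A \<noteq> {}" "B \<noteq> {}" "A \<union> B = V - K" "A \<inter> B = {}"
    "\<forall>a\<in>A. \<forall>b\<in>B. \<not> complement V E a b"
    using assms(2) unfolding cut_set_def disconnected_def by blast
  have AV: "A \<subseteq> V" and BV: "B \<subseteq> V" using AB(3) by auto
  have EAB: "\<forall>a\<in>A. \<forall>b\<in>B. E a b"
  proof (intro ballI)
    fix a b assume a: "a \<in> A" and b: "b \<in> B"
    then have "a \<noteq> b" using AB(4) by blast
    then show "E a b" using AB(5) a b AV BV unfolding complement_def by blast
  qed
  have EBA: "\<forall>b\<in>B. \<forall>a\<in>A. E b a" using EAB sym by blast
  have finA: "finite A" using AV fin finite_subset by blast
  have finB: "finite B" using BV fin finite_subset by blast
  have finK: "finite K" using KV fin finite_subset by blast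
  define D where "D = max_degree V E"
  have dgV: "dg V E v \<le> D" if "v \<in> V" for v
    unfolding D_def max_degree_def dg_def using fin that by (intro Max_ge) auto
  have dA: "\<forall>a\<in>A. int (dg A E a) \<le> int D - int (card B)"
  proof
    fix a assume a: "a \<in> A"
    have "dg A E a + card B \<le> dg V E a" using dg_join[OF fin AV BV AB(4) a] EAB a by blast
    moreover have "dg V E a \<le> D" using dgV a AV by blast
    ultimately show "int (dg A E a) \<le> int D - int (card B)" by linarith
  qed
  have dB: "\<forall>b\<in>B. int (dg B E b) \<le> int D - int (card A)"
  proof
    fix b assume b: "b \<in> B"
    have BA: "B \<inter> A = {}" using AB(4) by blast
    have "dg B E b + card A \<le> dg V E b" using dg_join[OF fin BV AV BA b] EBA b by blast
    moreover have "dg V E b \<le> D" using dgV b BV by blast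
    ultimately show "int (dg B E b) \<le> int D - int (card A)" by linarith
  qed
  obtain a0 where "a0 \<in> A" using AB(1) by blast
  then have dA1: "-1 \<le> int D - int (card B)" using dA by fastforce
  obtain b0 where "b0 \<in> B" using AB(2) by blast
  then have dB1: "-1 \<le> int D - int (card A)" using dB by fastforce
  define S where "S = H - K"
  define SA where "SA = S \<inter> A"
  define SB where "SB = S \<inter> B"
  have SAB: "S = SA \<union> SB" unfolding SA_def SB_def S_def using assms(3) AB(3) by blast
  have PA: "4 * int (chi A) \<le> 2 * int (om A) + int (card A) + (int D - int (card B)) + 1 + 3 * int (chi SA) - int (card SA)"
    using Pmain[OF finA _ dA dA1] unfolding SA_def by blast
  have PB: "4 * int (chi B) \<le> 2 * int (om B) + int (card B) + (int D - int (card A)) + 1 + 3 * int (chi SB) - int (card SB)"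
    using Pmain[OF finB _ dB dB1] unfolding SB_def by blast
  have c1: "chi V \<le> chi K + (chi A + chi B)"
  proof -
    have "V = K \<union> (A \<union> B)" using AB(3) KV by blast
    then have "chi V \<le> chi K + chi (A \<union> B)" using chi_union[OF finK] finA finB by simp
    moreover have "chi (A \<union> B) \<le> chi A + chi B" using chi_union[OF finA finB] .
    ultimately show ?thesis by simp
  qed
  have ABV: "A \<union> B \<subseteq> V" using AV BV by blast
  have c2: "om A + om B \<le> om V"
  proof -
    have "om A + om B \<le> om (A \<union> B)" using om_join[OF finA finB AB(4) EAB] .
    moreover have "om (A \<union> B) \<le> om V" using om_mono[OF fin ABV] .
    ultimately show ?thesis by simp
  qed
  have finSA: "finite SA" and finSB: "finite SB" using finA finB unfolding SA_def SB_def by auto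
  have c3: "chi SA + chi SB \<le> chi S"
  proof -
    have "\<forall>a\<in>SA. \<forall>b\<in>SB. E a b" using EAB unfolding SA_def SB_def by blast
    then have "chi SA + chi SB \<le> chi (SA \<union> SB)" using chi_join[OF finSA finSB] by blast
    then show ?thesis using SAB by simp
  qed
  have c4: "card S = card SA + card SB"
  proof -
    have "SA \<inter> SB = {}" using AB(4) unfolding SA_def SB_def by blast
    then show ?thesis using SAB card_Un_disjoint[OF finSA finSB] by simp
  qed
  have I: "4 * int (chi V) \<le> 4 * int (chi K) + 2 * int (om V) + 2 * int D + 2 + 3 * int (chi S) - int (card S)"
    using PA PB c1 c2 c3 c4 by linarith
  have "real_of_int (4 * int (chi V)) \<le> real_of_int (4 * int (chi K) + 2 * int (om V) + 2 * int D + 2 + 3 * int (chi S) - int (card S))"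
    using I by (simp only: of_int_le_iff)
  then have R: "4 * real (chi V) \<le> 4 * real (chi K) + 2 * real (om V) + 2 * real D + 2 + 3 * real (chi S) - real (card S)"
    by simp
  show ?thesis using R unfolding S_def D_def by (simp add: field_simps)
qed


end
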